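(* Let $p\geq 3$ be a prime and let $G$ be a group of order $p^5$ generated by elements $f_1,\dots,f_5$ which (possibly among other relations) satisfy: (i) $f_4^p=f_5^p=1$ and $f_5\in Z(G)$; (ii) $[f_2,f_1]=f_3$, $[f_3,f_1]=f_4$, $[f_4,f_1]=[f_3,f_2]=f_5$, $[f_4,f_2]=[f_4,f_3]=1$; (iii) $\langle f_4,f_5\rangle\cong C_p\times C_p$, and $G/\langle f_4,f_5\rangle$ is a non-abelian group of order $p^3$ and exponent $p$. Then $B_0(G)\neq 0$.
   Context: $[g,h]=g^{-1}h^{-1}gh$; $Z(G)$ is the center of $G$; $C_p$ is the cyclic group of order $p$. $B_0(G)=\bigcap_A \ker\{\mathrm{res}^G_A : H^2(G,\mathbb{Q}/\mathbb{Z})\to H^2(A,\mathbb{Q}/\mathbb{Z})\}$, where $A$ runs over all bicyclic subgroups of $G$ (cyclic groups or direct products of two cyclic groups), with trivial action on $\mathbb{Q}/\mathbb{Z}$. *)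

theory Defs
  imports "HOL-Algebra.Algebra"
begin

definition commutator :: "('a, 'b) monoid_scheme \<Rightarrow> 'a \<Rightarrow> 'a \<Rightarrow> 'a" where
  "commutator G g h = inv\<^bsub>G\<^esub> g \<otimes>\<^bsub>G\<^esub> inv\<^bsub>G\<^esub> h \<otimes>\<^bsub>G\<^esub> g \<otimes>\<^bsub>G\<^esub> h"

definition has_exponent :: "('a, 'b) monoid_scheme \<Rightarrow> nat \<Rightarrow> bool" where
  "has_exponent G n \<longleftrightarrow> n > 0 \<and> (\<forall>x\<in>carrier G. x [^]\<^bsub>G\<^esub> n = \<one>\<^bsub>G\<^esub>) \<and>
     (\<forall>m>0. (\<forall>x\<in>carrier G. x [^]\<^bsub>G\<^esub> m = \<one>\<^bsub>G\<^esub>) \<longrightarrow> n dvd m)"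

(* Q/Z is represented by rat modulo the integers *)
definition qz_eq :: "rat \<Rightarrow> rat \<Rightarrow> bool" where
  "qz_eq x y \<longleftrightarrow> x - y \<in> \<int>"

(* inhomogeneous 2-cochains G x G -> Q/Z with trivial action *)
definition cocycle2 :: "('a, 'b) monoid_scheme \<Rightarrow> ('a \<Rightarrow> 'a \<Rightarrow> rat) \<Rightarrow> bool" where
  "cocycle2 G c \<longleftrightarrow> (\<forall>g\<in>carrier G. \<forall>h\<in>carrier G. \<forall>k\<in>carrier G.
      qz_eq (c h k - c (g \<otimes>\<^bsub>G\<^esub> h) k + c g (h \<otimes>\<^bsub>G\<^esub> k) - c g h) 0)"

definition coboundary2 :: "('a, 'b) monoid_scheme \<Rightarrow> ('a \<Rightarrow> 'a \<Rightarrow> rat) \<Rightarrow> bool" where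
  "coboundary2 G c \<longleftrightarrow> (\<exists>f :: 'a \<Rightarrow> rat. \<forall>g\<in>carrier G. \<forall>h\<in>carrier G.
      qz_eq (c g h) (f h - f (g \<otimes>\<^bsub>G\<^esub> h) + f g))"

definition bicyclic_subgroup :: "('a, 'b) monoid_scheme \<Rightarrow> 'a set \<Rightarrow> bool" where
  "bicyclic_subgroup G A \<longleftrightarrow> subgroup A G \<and>
     (\<exists>a\<in>carrier G. \<exists>b\<in>carrier G. A = generate G {a, b}) \<and>
     (\<forall>x\<in>A. \<forall>y\<in>A. x \<otimes>\<^bsub>G\<^esub> y = y \<otimes>\<^bsub>G\<^esub> x)"

(* B_0(G) \<noteq> 0: some class in H^2(G,Q/Z) is nonzero but restricts to zero
   in H^2(A,Q/Z) for every bicyclic subgroup A *)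
definition bogomolov_nontrivial :: "('a, 'b) monoid_scheme \<Rightarrow> bool" where
  "bogomolov_nontrivial G \<longleftrightarrow> (\<exists>c. cocycle2 G c \<and> \<not> coboundary2 G c \<and>
     (\<forall>A. bicyclic_subgroup G A \<longrightarrow> coboundary2 (G\<lparr>carrier := A\<rparr>) c))"

end

theory Submission
  imports Defs
begin


lemma arith: fixes a1 b1 c1 a2 b2 c2 a3 b3 c3 P :: int
  shows "(c2 * b3 - b2 * c3 + b2 * a3 * b3 - (((c1 + c2 + a2 * b1) mod P) * b3 - ((b1 + b2) mod P) * c3 + ((b1 + b2) mod P) * a3 * b3) + (c1 * ((b2 + b3) mod P) - b1 * ((c2 + c3 + a3 * b2) mod P) + b1 * ((a2 + a3) mod P) * ((b2 + b3) mod P)) - (c1 * b2 - b1 * c2 + b1 * a2 * b2)) mod P = 0"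
proof -
  have m: "(w mod P) mod P = w mod P" for w :: int by simp
  have "(c2 * b3 - b2 * c3 + b2 * a3 * b3 - (((c1 + c2 + a2 * b1) mod P) * b3 - ((b1 + b2) mod P) * c3 + ((b1 + b2) mod P) * a3 * b3) + (c1 * ((b2 + b3) mod P) - b1 * ((c2 + c3 + a3 * b2) mod P) + b1 * ((a2 + a3) mod P) * ((b2 + b3) mod P)) - (c1 * b2 - b1 * c2 + b1 * a2 * b2)) mod P
   = (c2 * b3 - b2 * c3 + b2 * a3 * b3 - (((c1 + c2 + a2 * b1)) * b3 - ((b1 + b2)) * c3 + ((b1 + b2)) * a3 * b3) + (c1 * ((b2 + b3)) - b1 * ((c2 + c3 + a3 * b2)) + b1 * ((a2 + a3)) * ((b2 + b3))) - (c1 * b2 - b1 * c2 + b1 * a2 * b2)) mod P"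
    by (intro mod_add_cong mod_diff_cong mod_mult_cong refl m)
  also have "(c2 * b3 - b2 * c3 + b2 * a3 * b3 - (((c1 + c2 + a2 * b1)) * b3 - ((b1 + b2)) * c3 + ((b1 + b2)) * a3 * b3) + (c1 * ((b2 + b3)) - b1 * ((c2 + c3 + a3 * b2)) + b1 * ((a2 + a3)) * ((b2 + b3))) - (c1 * b2 - b1 * c2 + b1 * a2 * b2)) = 0" by (simp add: algebra_simps)
  finally show ?thesis by simp
qed

lemma (in monoid) pow_comm2:
  assumes "x \<otimes> y = y \<otimes> x" "x \<in> carrier G" "y \<in> carrier G"
  shows "x [^] (m::nat) \<otimes> y [^] (n::nat) = y [^] n \<otimes> x [^] m"
proof -
  have "y [^] n \<otimes> x = x \<otimes> y [^] n" using group_commutes_pow[of y x n] assms by simp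
  then show ?thesis using group_commutes_pow[of x "y [^] n" m] assms by simp
qed

lemma (in monoid) pow_mod_p:
  assumes "x \<in> carrier G" "x [^] (p::nat) = \<one>"
  shows "x [^] (n::nat) = x [^] (n mod p)"
proof -
  have "x [^] n = x [^] (p * (n div p) + n mod p)" by simp
  also have "\<dots> = (x [^] p) [^] (n div p) \<otimes> x [^] (n mod p)"
    by (simp only: nat_pow_pow[OF assms(1)] nat_pow_mult[OF assms(1)])
  also have "\<dots> = x [^] (n mod p)" using assms by (simp add: nat_pow_one)
  finally show ?thesis .
qed

locale heis = group Q for Q (structure) +
  fixes p :: nat and x y z
  assumes p_prime: "Factorial_Ring.prime p"
    and xyz: "x \<in> carrier Q" "y \<in> carrier Q" "z \<in> carrier Q"
    and yx: "y \<otimes> x = x \<otimes> y \<otimes> z"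
    and zx: "z \<otimes> x = x \<otimes> z" and zy: "z \<otimes> y = y \<otimes> z"
    and xp: "x [^] p = \<one>" and yp: "y [^] p = \<one>" and zp: "z [^] p = \<one>"
    and finQ: "finite (carrier Q)" and cardQ: "card (carrier Q) = p ^ 3"
    and genQ: "carrier Q \<subseteq> generate Q {x, y, z}"
begin

lemma p_gt1: "p > 1" using p_prime prime_gt_1_nat by blast

definition E :: "nat \<times> nat \<times> nat \<Rightarrow> 'a" where
  "E t = (case t of (a, b, c) \<Rightarrow> x [^] a \<otimes> y [^] b \<otimes> z [^] c)"

definition box :: "(nat \<times> nat \<times> nat) set" where
  "box = {0..<p} \<times> {0..<p} \<times> {0..<p}"

lemma E_closed[simp]: "E t \<in> carrier Q"
  using xyz by (auto simp: E_def split: prod.splits)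

lemma y_xa: "y \<otimes> x [^] (a::nat) = x [^] a \<otimes> y \<otimes> z [^] a"
proof (induction a)
  case 0 then show ?case using xyz by simp
next
  case (Suc a)
  have zax: "z [^] a \<otimes> x = x \<otimes> z [^] a" using group_commutes_pow[of z x a] zx xyz by simp
  have zz: "z \<otimes> z [^] a = z [^] a \<otimes> z" by (metis nat_pow_Suc nat_pow_Suc2 xyz(3))
  have "y \<otimes> x [^] Suc a = (y \<otimes> x [^] a) \<otimes> x" using xyz by (simp add: m_assoc)
  also have "\<dots> = x [^] a \<otimes> y \<otimes> (z [^] a \<otimes> x)" using Suc xyz by (simp add: m_assoc)
  also have "\<dots> = x [^] a \<otimes> (y \<otimes> x) \<otimes> z [^] a" using zax xyz by (simp add: m_assoc)
  also have "\<dots> = x [^] a \<otimes> x \<otimes> y \<otimes> (z \<otimes> z [^] a)" using yx xyz by (simp add: m_assoc)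
  also have "\<dots> = x [^] Suc a \<otimes> y \<otimes> z [^] Suc a" using xyz zz by (simp add: m_assoc)
  finally show ?case .
qed

lemma yb_xa: "y [^] (b::nat) \<otimes> x [^] (a::nat) = x [^] a \<otimes> y [^] b \<otimes> z [^] (a * b)"
proof (induction b)
  case 0 then show ?case using xyz by simp
next
  case (Suc b)
  have zy': "z [^] (a*b) \<otimes> y = y \<otimes> z [^] (a*b)" using group_commutes_pow[of z y "a*b"] zy xyz by simp
  have "y [^] Suc b \<otimes> x [^] a = y [^] b \<otimes> (y \<otimes> x [^] a)" using xyz by (simp add: nat_pow_Suc2 m_assoc)
  also have "\<dots> = (y [^] b \<otimes> x [^] a) \<otimes> y \<otimes> z [^] a" using y_xa xyz by (simp add: m_assoc)
  also have "\<dots> = x [^] a \<otimes> y [^] b \<otimes> (z [^] (a*b) \<otimes> y) \<otimes> z [^] a" using Suc xyz by (simp add: m_assoc)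
  also have "\<dots> = x [^] a \<otimes> (y [^] b \<otimes> y) \<otimes> (z [^] (a*b) \<otimes> z [^] a)" using zy' xyz by (simp add: m_assoc)
  also have "\<dots> = x [^] a \<otimes> y [^] Suc b \<otimes> z [^] (a * Suc b)" using xyz by (simp add: nat_pow_mult add.commute)
  finally show ?case .
qed

lemma E_mult: "E (a,b,c) \<otimes> E (a2,b2,c2) = E (a + a2, b + b2, c + c2 + a2 * b)"
proof -
  have zc: "z [^] c \<otimes> (x [^] a2 \<otimes> y [^] b2) = (x [^] a2 \<otimes> y [^] b2) \<otimes> z [^] c"
  proof -
    have "z \<otimes> (x [^] a2 \<otimes> y [^] b2) = (x [^] a2 \<otimes> y [^] b2) \<otimes> z"
    proof -
      have "z \<otimes> x [^] a2 = x [^] a2 \<otimes> z" using pow_comm2[of x z a2 1] zx xyz by simp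
      moreover have "z \<otimes> y [^] b2 = y [^] b2 \<otimes> z" using pow_comm2[of y z b2 1] zy xyz by simp
      ultimately show ?thesis using xyz by (metis m_assoc nat_pow_closed)
    qed
    then show ?thesis using group_commutes_pow[of z _ c] xyz by simp
  qed
  have "E (a,b,c) \<otimes> E (a2,b2,c2) = x [^] a \<otimes> y [^] b \<otimes> (z [^] c \<otimes> (x [^] a2 \<otimes> y [^] b2)) \<otimes> z [^] c2"
    using xyz by (simp add: E_def m_assoc)
  also have "\<dots> = x [^] a \<otimes> (y [^] b \<otimes> x [^] a2) \<otimes> y [^] b2 \<otimes> (z [^] c \<otimes> z [^] c2)"
    using zc xyz by (simp add: m_assoc)
  also have "\<dots> = x [^] a \<otimes> x [^] a2 \<otimes> y [^] b \<otimes> (z [^] (a2*b) \<otimes> y [^] b2) \<otimes> (z [^] c \<otimes> z [^] c2)"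
    using yb_xa xyz by (simp add: m_assoc)
  also have "\<dots> = x [^] a \<otimes> x [^] a2 \<otimes> y [^] b \<otimes> y [^] b2 \<otimes> (z [^] (a2*b) \<otimes> (z [^] c \<otimes> z [^] c2))"
    using pow_comm2[of z y "a2*b" b2] zy xyz by (simp add: m_assoc)
  also have "\<dots> = E (a + a2, b + b2, c + c2 + a2 * b)"
    using xyz by (simp add: E_def m_assoc nat_pow_mult add.commute add.left_commute)
  finally show ?thesis .
qed

lemma E_mod: "E (a,b,c) = E (a mod p, b mod p, c mod p)"
  using pow_mod_p[OF _ xp] pow_mod_p[OF _ yp] pow_mod_p[OF _ zp] xyz by (simp add: E_def)


lemma inv_pow: assumes "w \<in> carrier Q" "w [^] p = \<one>" shows "inv w = w [^] (p - 1)"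
proof -
  have "w [^] (p - 1) \<otimes> w = w [^] p" using assms p_gt1
    by (metis Suc_diff_1 less_trans nat_pow_Suc zero_less_one)
  then show ?thesis using assms by (metis inv_equality nat_pow_closed)
qed

lemma card_box: "card box = p ^ 3"
  by (simp add: box_def card_cartesian_product power3_eq_cube)

lemma box_mem: "(a, b, c) \<in> box \<longleftrightarrow> a < p \<and> b < p \<and> c < p"
  by (auto simp: box_def)

lemma E_mult_box: "E t \<otimes> E t2 \<in> E ` box"
proof -
  obtain a b c where t: "t = (a,b,c)" by (cases t) auto
  obtain a2 b2 c2 where t2: "t2 = (a2,b2,c2)" by (cases t2) auto
  have "E t \<otimes> E t2 = E ((a + a2) mod p, (b + b2) mod p, (c + c2 + a2 * b) mod p)"
    using E_mult E_mod t t2 by simp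
  moreover have "((a + a2) mod p, (b + b2) mod p, (c + c2 + a2 * b) mod p) \<in> box"
    using p_gt1 by (simp add: box_mem)
  ultimately show ?thesis by blast
qed

lemma E_one: "E (0,0,0) = \<one>" by (simp add: E_def)
lemma E_x: "E (1,0,0) = x" using xyz by (simp add: E_def)
lemma E_y: "E (0,1,0) = y" using xyz by (simp add: E_def)
lemma E_z: "E (0,0,1) = z" using xyz by (simp add: E_def)
lemma E_z_pow: "E (0,0,c) = z [^] c" using xyz by (simp add: E_def)

lemma carrier_eq: "carrier Q = E ` box"
proof
  show "E ` box \<subseteq> carrier Q" by auto
  show "carrier Q \<subseteq> E ` box"
  proof
    fix q assume "q \<in> carrier Q"
    then have "q \<in> generate Q {x, y, z}" using genQ by auto
    then show "q \<in> E ` box"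
    proof (induction rule: generate.induct)
      case one
      then show ?case using E_one p_gt1 box_mem by (metis image_eqI less_trans zero_less_one)
    next
      case (incl h)
      then show ?case using E_x E_y E_z p_gt1 box_mem
        by (metis empty_iff image_eqI insert_iff less_trans zero_less_one)
    next
      case (inv h)
      have "p - 1 < p" using p_gt1 by simp
      have "inv x = E (p - 1, 0, 0)" using inv_pow[OF xyz(1) xp] xyz by (simp add: E_def)
      moreover have "inv y = E (0, p - 1, 0)" using inv_pow[OF xyz(2) yp] xyz by (simp add: E_def)
      moreover have "inv z = E (0, 0, p - 1)" using inv_pow[OF xyz(3) zp] xyz by (simp add: E_def)
      ultimately show ?case using inv p_gt1 \<open>p - 1 < p\<close> box_mem
        by (smt (verit) empty_iff image_eqI insert_iff less_trans zero_less_one)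
    next
      case (eng h1 h2)
      then show ?case using E_mult_box by auto
    qed
  qed
qed

lemma E_inj: "inj_on E box"
  using carrier_eq cardQ card_box by (intro eq_card_imp_inj_on) (auto simp: box_def)

definition coord :: "'a \<Rightarrow> nat \<times> nat \<times> nat" where
  "coord q = the_inv_into box E q"

lemma coord_E: "t \<in> box \<Longrightarrow> coord (E t) = t"
  by (simp add: coord_def E_inj the_inv_into_f_f)

lemma coord_in: "q \<in> carrier Q \<Longrightarrow> coord q \<in> box"
  using carrier_eq E_inj by (simp add: coord_def the_inv_into_into)

lemma E_coord: "q \<in> carrier Q \<Longrightarrow> E (coord q) = q"
  using carrier_eq E_inj by (simp add: coord_def f_the_inv_into_f)

lemma coord_mult:
  assumes "q \<in> carrier Q" "r \<in> carrier Q" "coord q = (a,b,c)" "coord r = (a2,b2,c2)"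
  shows "coord (q \<otimes> r) = ((a + a2) mod p, (b + b2) mod p, (c + c2 + a2 * b) mod p)"
proof -
  have "q \<otimes> r = E (a,b,c) \<otimes> E (a2,b2,c2)" using assms E_coord by metis
  also have "\<dots> = E ((a + a2) mod p, (b + b2) mod p, (c + c2 + a2 * b) mod p)"
    using E_mult E_mod by simp
  finally show ?thesis using p_gt1 by (simp add: coord_E box_mem)
qed

lemma coord_one: "coord \<one> = (0,0,0)" using E_one coord_E p_gt1 box_mem
  by (metis less_trans zero_less_one)
lemma coord_y: "coord y = (0,1,0)" using E_y coord_E p_gt1 box_mem by (metis less_trans zero_less_one)
lemma coord_z: "coord z = (0,0,1)" using E_z coord_E p_gt1 box_mem by (metis less_trans zero_less_one)

definition beta :: "'a \<Rightarrow> 'a \<Rightarrow> rat" where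
  "beta q r = (case coord q of (a,b,c) \<Rightarrow> case coord r of (a2,b2,c2) \<Rightarrow>
     of_int (int c * int b2 - int b * int c2 + int b * int a2 * int b2) / of_nat p)"

lemma beta_one_r: "beta q \<one> = 0" by (simp add: beta_def coord_one split: prod.splits)
lemma beta_one_l: "beta \<one> q = 0" by (simp add: beta_def coord_one split: prod.splits)
lemma beta_yz: "beta y z - beta z y = - 2 / of_nat p"
  by (simp add: beta_def coord_y coord_z)

lemma beta_cocycle: "cocycle2 Q beta"
  unfolding cocycle2_def qz_eq_def
proof (intro ballI)
  fix g h k assume g: "g \<in> carrier Q" and h: "h \<in> carrier Q" and k: "k \<in> carrier Q"
  obtain a1 b1 c1 where c1: "coord g = (a1,b1,c1)" by (cases "coord g") auto
  obtain a2 b2 c2 where c2: "coord h = (a2,b2,c2)" by (cases "coord h") auto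
  obtain a3 b3 c3 where c3: "coord k = (a3,b3,c3)" by (cases "coord k") auto
  have gh: "coord (g \<otimes> h) = ((a1 + a2) mod p, (b1 + b2) mod p, (c1 + c2 + a2 * b1) mod p)"
    using coord_mult g h c1 c2 by blast
  have hk: "coord (h \<otimes> k) = ((a2 + a3) mod p, (b2 + b3) mod p, (c2 + c3 + a3 * b2) mod p)"
    using coord_mult h k c2 c3 by blast
  define P where "P = int p"
  define Num where "Num = (int c2 * int b3 - int b2 * int c3 + int b2 * int a3 * int b3 - (((int c1 + int c2 + int a2 * int b1) mod P) * int b3 - ((int b1 + int b2) mod P) * int c3 + ((int b1 + int b2) mod P) * int a3 * int b3) + (int c1 * ((int b2 + int b3) mod P) - int b1 * ((int c2 + int c3 + int a3 * int b2) mod P) + int b1 * ((int a2 + int a3) mod P) * ((int b2 + int b3) mod P)) - (int c1 * int b2 - int b1 * int c2 + int b1 * int a2 * int b2))"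
  have Nm: "Num mod P = 0" unfolding Num_def by (rule arith)
  have B1: "beta h k - beta (g \<otimes> h) k + beta g (h \<otimes> k) - beta g h = (of_int (int c2 * int b3 - int b2 * int c3 + int b2 * int a3 * int b3) - of_int (int ((c1 + c2 + a2 * b1) mod p) * int b3 - int ((b1 + b2) mod p) * int c3 + int ((b1 + b2) mod p) * int a3 * int b3) + of_int (int c1 * int ((b2 + b3) mod p) - int b1 * int ((c2 + c3 + a3 * b2) mod p) + int b1 * int ((a2 + a3) mod p) * int ((b2 + b3) mod p)) - of_int (int c1 * int b2 - int b1 * int c2 + int b1 * int a2 * int b2)) / of_nat p"
    unfolding beta_def c1 c2 c3 gh hk prod.case by (simp only: diff_divide_distrib add_divide_distrib)
  have eqN: "(int c2 * int b3 - int b2 * int c3 + int b2 * int a3 * int b3) - (int ((c1 + c2 + a2 * b1) mod p) * int b3 - int ((b1 + b2) mod p) * int c3 + int ((b1 + b2) mod p) * int a3 * int b3) + (int c1 * int ((b2 + b3) mod p) - int b1 * int ((c2 + c3 + a3 * b2) mod p) + int b1 * int ((a2 + a3) mod p) * int ((b2 + b3) mod p)) - (int c1 * int b2 - int b1 * int c2 + int b1 * int a2 * int b2) = Num"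
    unfolding Num_def P_def by (simp only: zmod_int of_nat_add of_nat_mult)
  have B2: "(of_int (int c2 * int b3 - int b2 * int c3 + int b2 * int a3 * int b3) - of_int (int ((c1 + c2 + a2 * b1) mod p) * int b3 - int ((b1 + b2) mod p) * int c3 + int ((b1 + b2) mod p) * int a3 * int b3) + of_int (int c1 * int ((b2 + b3) mod p) - int b1 * int ((c2 + c3 + a3 * b2) mod p) + int b1 * int ((a2 + a3) mod p) * int ((b2 + b3) mod p)) - of_int (int c1 * int b2 - int b1 * int c2 + int b1 * int a2 * int b2) :: rat) = of_int Num"
    by (simp only: eqN[symmetric] of_int_add of_int_diff)
  have "beta h k - beta (g \<otimes> h) k + beta g (h \<otimes> k) - beta g h = of_int Num / of_nat p"
    by (simp only: B1 B2)
  also have "\<dots> = of_int (Num div P)"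
  proof -
    have "Num = (Num div P) * P" using div_mult_mod_eq[of Num P] Nm by simp
    then have "of_int Num = (of_int (Num div P) :: rat) * of_nat p" unfolding P_def
      by (metis of_int_mult of_int_of_nat_eq)
    then show ?thesis using p_gt1 by simp
  qed
  finally show "beta h k - beta (g \<otimes> h) k + beta g (h \<otimes> k) - beta g h - 0 \<in> \<int>" by simp
qed

end



lemma (in group) pow_eq_mod_ord:
  assumes u: "u \<in> carrier G" and e: "u [^] (i::nat) = u [^] (k::nat)"
  shows "i mod ord u = k mod ord u"
proof -
  have "int (ord u) dvd (int k - int i)"
    using int_pow_eq[OF u, of "int i" "int k"] e by (simp add: int_pow_int)
  then have "int (ord u) dvd (int i - int k)" by (simp add: dvd_diff_commute)
  then have "int i mod int (ord u) = int k mod int (ord u)" by (simp add: mod_eq_dvd_iff)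
  then show ?thesis by (simp flip: zmod_int)
qed

lemma (in group) cyclic_cob:
  assumes fin: "finite (carrier G)" and u: "u \<in> carrier G" and coc: "cocycle2 G c"
  shows "\<exists>f. \<forall>(i::nat) (j::nat). qz_eq (c (u[^]i) (u[^]j)) (f (u[^]j) - f (u[^]i \<otimes> u[^]j) + f (u[^]i))"
proof -
  define n where "n = ord u"
  have n1: "n \<ge> 1" using ord_ge_1[OF fin u] n_def by simp
  have un: "u [^] n = \<one>" using u n_def by simp
  have umod: "u [^] k = u [^] (k mod n)" for k :: nat using pow_mod_p[OF u un] .
  have cc: "c h k - c (g \<otimes> h) k + c g (h \<otimes> k) - c g h \<in> \<int>"
    if "g \<in> carrier G" "h \<in> carrier G" "k \<in> carrier G" for g h k
    using coc that unfolding cocycle2_def qz_eq_def by fastforce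
  define S where "S = (\<Sum>i<n. c u (u [^] i))"
  define s where "s = S / of_nat n"
  have ns: "of_nat n * s = S" using n1 by (simp add: s_def)
  define Fb where "Fb k = c \<one> \<one> + of_nat k * s - (\<Sum>i<k. c u (u [^] i))" for k :: nat
  define F where "F k = Fb (k mod n)" for k :: nat
  have step: "F (Suc k) = F k + s - c u (u [^] k)" for k
  proof (cases "Suc (k mod n) < n")
    case True
    then have "Suc k mod n = Suc (k mod n)" by (simp add: mod_Suc)
    then show ?thesis using umod[of k] unfolding F_def Fb_def by (simp add: algebra_simps)
  next
    case False
    have "k mod n < n" using n1 by simp
    then have km: "k mod n = n - 1" using False by linarith
    then have "Suc k mod n = 0" using n1 by (simp add: mod_Suc)
    then have "F (Suc k) = c \<one> \<one>" unfolding F_def Fb_def by simp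
    moreover have "S = (\<Sum>i<n - 1. c u (u [^] i)) + c u (u [^] (n - 1))"
    proof -
      have "n = Suc (n - 1)" using n1 by simp
      then show ?thesis unfolding S_def by (metis sum.lessThan_Suc)
    qed
    moreover have "u [^] k = u [^] (n - 1)" using umod[of k] km by simp
    ultimately show ?thesis unfolding F_def Fb_def using km ns n1
      by (simp add: algebra_simps of_nat_diff)
  qed
  have F0: "F 0 = c \<one> \<one>" unfolding F_def Fb_def by simp
  have Fwd: "F i = F k" if "u [^] i = u [^] k" for i k
  proof -
    have "i mod n = k mod n" using pow_eq_mod_ord[OF u that] n_def by simp
    then show ?thesis unfolding F_def by simp
  qed
  define f where "f v = F (SOME k. v = u [^] k)" for v
  have fF: "f (u [^] i) = F i" for i
  proof -
    have "u [^] i = u [^] (SOME k::nat. u [^] i = u [^] k)" by (rule someI_ex) (rule exI, rule refl)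
    then have "F i = F (SOME k. u [^] i = u [^] k)" by (rule Fwd)
    then show ?thesis unfolding f_def by simp
  qed
  have main: "c (u[^]i) (u[^]j) - (F j - F (i + j) + F i) \<in> \<int>" for i j
  proof (induction i)
    case 0
    have "c \<one> (u [^] j) - c (\<one> \<otimes> \<one>) (u [^] j) + c \<one> (\<one> \<otimes> u [^] j) - c \<one> \<one> \<in> \<int>"
      using cc[of "\<one>" "\<one>" "u [^] j"] u by simp
    then show ?case using F0 u by simp
  next
    case (Suc i)
    have A: "c (u[^]i) (u[^]j) - c (u \<otimes> u[^]i) (u[^]j) + c u (u[^]i \<otimes> u[^]j) - c u (u[^]i) \<in> \<int>"
      using cc[of u "u [^] i" "u [^] j"] u by simp
    have e1: "u \<otimes> u[^]i = u [^] Suc i" using u nat_pow_Suc2[of u i] by simp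
    have e2: "u[^]i \<otimes> u[^]j = u [^] (i + j)" using u by (simp add: nat_pow_mult)
    have B: "c u (u [^] (i + j)) = s - F (Suc (i + j)) + F (i + j)" using step[of "i+j"] by simp
    have D: "c u (u [^] i) = s - F (Suc i) + F i" using step[of i] by simp
    have Eq: "c (u[^]Suc i) (u[^]j) - (F j - F (Suc i + j) + F (Suc i))
      = (c (u[^]i) (u[^]j) - (F j - F (i + j) + F i))
        - (c (u[^]i) (u[^]j) - c (u \<otimes> u[^]i) (u[^]j) + c u (u[^]i \<otimes> u[^]j) - c u (u[^]i))"
      unfolding e1 e2 B D by (simp add: algebra_simps)
    have "(c (u[^]i) (u[^]j) - (F j - F (i + j) + F i))
        - (c (u[^]i) (u[^]j) - c (u \<otimes> u[^]i) (u[^]j) + c u (u[^]i \<otimes> u[^]j) - c u (u[^]i)) \<in> \<int>"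
      by (rule Ints_diff[OF Suc.IH A])
    then show ?case unfolding Eq .
  qed
  show ?thesis
  proof (rule exI[of _ f], intro allI)
    fix i j :: nat
    have "u[^]i \<otimes> u[^]j = u [^] (i + j)" using u by (simp add: nat_pow_mult)
    then show "qz_eq (c (u[^]i) (u[^]j)) (f (u[^]j) - f (u[^]i \<otimes> u[^]j) + f (u[^]i))"
      unfolding qz_eq_def using main fF by simp
  qed
qed




context heis begin

lemma coord_pow:
  assumes "q \<in> carrier Q" "coord q = (a,b,c)"
  shows "fst (coord (q [^] n)) = (n*a) mod p \<and> fst (snd (coord (q [^] (n::nat)))) = (n*b) mod p"
proof (induction n)
  case 0 then show ?case by (simp add: coord_one)
next
  case (Suc n)
  obtain a' b' c' where c': "coord (q [^] n) = (a',b',c')" by (cases "coord (q [^] n)") auto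
  have "coord (q [^] n \<otimes> q) = ((a' + a) mod p, (b' + b) mod p, (c' + c + a * b') mod p)"
    using coord_mult[OF _ assms(1) c' assms(2)] assms(1) by simp
  moreover have "q [^] Suc n = q [^] n \<otimes> q" by simp
  ultimately show ?case using Suc c' by (simp add: mod_add_right_eq add.commute)
qed

lemma coord_comm:
  assumes "q \<in> carrier Q" "r \<in> carrier Q" "q \<otimes> r = r \<otimes> q"
    "coord q = (a1,a2,a3)" "coord r = (b1,b2,b3)"
  shows "(a3 + b3 + b1 * a2) mod p = (b3 + a3 + a1 * b2) mod p"
  using coord_mult[OF assms(1,2,4,5)] coord_mult[OF assms(2,1,5,4)] assms(3) by simp

lemma coord_zero12:
  assumes "q \<in> carrier Q" "fst (coord q) = 0" "fst (snd (coord q)) = 0"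
  shows "q = z [^] (snd (snd (coord q))) \<and> snd (snd (coord q)) < p"
proof -
  obtain a b c where abc: "coord q = (a,b,c)" by (cases "coord q") auto
  have "q = E (a,b,c)" using E_coord[OF assms(1)] abc by simp
  moreover have "c < p" using coord_in[OF assms(1)] abc by (simp add: box_mem)
  ultimately show ?thesis using assms abc E_z_pow by simp
qed

end




lemma (in group) comm_rel:
  assumes a: "a \<in> carrier G" and b: "b \<in> carrier G" and k: "commutator G a b = k"
  shows "a \<otimes> b = b \<otimes> a \<otimes> k"
proof -
  have "b \<otimes> a \<otimes> k = b \<otimes> (a \<otimes> (inv a \<otimes> (inv b \<otimes> (a \<otimes> b))))"
    unfolding k[symmetric] commutator_def using a b by (simp add: m_assoc)
  also have "\<dots> = b \<otimes> (inv b \<otimes> (a \<otimes> b))" using a b by (simp add: m_assoc[symmetric])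
  also have "\<dots> = a \<otimes> b" using a b by (simp add: m_assoc[symmetric])
  finally show ?thesis by simp
qed

lemma (in group) inv_pow_gen:
  assumes "w \<in> carrier G" "w [^] (p::nat) = \<one>" "p \<ge> 1"
  shows "inv w = w [^] (p - 1)"
proof -
  have "w [^] (p - 1) \<otimes> w = w [^] p" using assms
    by (metis Suc_diff_1 le_less_trans less_numeral_extra(1) nat_pow_Suc less_le_trans zero_less_one
        linorder_not_le not_one_le_zero)
  then show ?thesis using assms by (metis inv_equality nat_pow_closed)
qed

locale L = group G for G (structure) +
  fixes p :: nat and f1 f2 f3 f4 f5 :: 'a
  assumes p_prime: "Factorial_Ring.prime p" and p_ge: "p \<ge> 3"
    and finG: "finite (carrier G)"
    and fin: "f1 \<in> carrier G" "f2 \<in> carrier G" "f3 \<in> carrier G" "f4 \<in> carrier G" "f5 \<in> carrier G"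
    and gen: "generate G {f1, f2, f3, f4, f5} = carrier G"
    and i1: "f4 [^] p = \<one>" "f5 [^] p = \<one>"
    and i2: "\<forall>x\<in>carrier G. x \<otimes> f5 = f5 \<otimes> x"
    and ii: "commutator G f2 f1 = f3" "commutator G f3 f1 = f4"
            "commutator G f4 f1 = f5" "commutator G f3 f2 = f5"
            "commutator G f4 f2 = \<one>" "commutator G f4 f3 = \<one>"
    and iii1: "G\<lparr>carrier := generate G {f4, f5}\<rparr> \<cong> integer_mod_group p \<times>\<times> integer_mod_group p"
    and iii_normal: "generate G {f4, f5} \<lhd> G"
    and iii2: "order (G Mod generate G {f4, f5}) = p ^ 3"
    and iii4: "has_exponent (G Mod generate G {f4, f5}) p"
begin

abbreviation "N \<equiv> generate G {f4, f5}"
abbreviation "Q \<equiv> G Mod N"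

definition pi :: "'a \<Rightarrow> 'a set" where "pi g = N #> g"

lemma p_gt1: "p > 1" using p_ge by simp

lemma r21: "f2 \<otimes> f1 = f1 \<otimes> f2 \<otimes> f3" using comm_rel[OF fin(2) fin(1) ii(1)] .
lemma r31: "f3 \<otimes> f1 = f1 \<otimes> f3 \<otimes> f4" using comm_rel[OF fin(3) fin(1) ii(2)] .
lemma r41: "f4 \<otimes> f1 = f1 \<otimes> f4 \<otimes> f5" using comm_rel[OF fin(4) fin(1) ii(3)] .
lemma r32: "f3 \<otimes> f2 = f2 \<otimes> f3 \<otimes> f5" using comm_rel[OF fin(3) fin(2) ii(4)] .
lemma r42: "f4 \<otimes> f2 = f2 \<otimes> f4" using comm_rel[OF fin(4) fin(2) ii(5)] fin by simp
lemma r43: "f4 \<otimes> f3 = f3 \<otimes> f4" using comm_rel[OF fin(4) fin(3) ii(6)] fin by simp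
lemma c5: "g \<in> carrier G \<Longrightarrow> g \<otimes> f5 = f5 \<otimes> g" using i2 by blast

lemma N_sub: "subgroup N G" using fin by (intro generate_is_subgroup) auto
lemma f4N: "f4 \<in> N" by (rule generate.incl) simp
lemma f5N: "f5 \<in> N" by (rule generate.incl) simp

lemma grpQ: "group Q" using normal.factorgroup_is_group[OF iii_normal] .
lemma pi_hom: "pi \<in> hom G Q" unfolding pi_def using normal.r_coset_hom_Mod[OF iii_normal] .
lemma gh: "group_hom G Q pi"
  using grpQ pi_hom is_group by (simp add: group_hom_def group_hom_axioms_def)

lemma pi_closed: "g \<in> carrier G \<Longrightarrow> pi g \<in> carrier Q"
  using pi_hom by (simp add: hom_def Pi_def)
lemma pi_mult: "g \<in> carrier G \<Longrightarrow> h \<in> carrier G \<Longrightarrow> pi (g \<otimes> h) = pi g \<otimes>\<^bsub>Q\<^esub> pi h"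
  using pi_hom by (simp add: hom_def)
lemma pi_pow: "g \<in> carrier G \<Longrightarrow> pi (g [^] (n::nat)) = pi g [^]\<^bsub>Q\<^esub> n"
  using hom_nat_pow[OF pi_hom _ is_group grpQ] by simp
lemma pi_inv: "g \<in> carrier G \<Longrightarrow> pi (inv g) = inv\<^bsub>Q\<^esub> (pi g)"
  using group_hom.hom_inv[OF gh] by simp
lemma pi_N: "n \<in> N \<Longrightarrow> pi n = \<one>\<^bsub>Q\<^esub>"
  unfolding pi_def using subgroup.rcos_const[OF N_sub is_group] by simp
lemma pi_one: "pi \<one> = \<one>\<^bsub>Q\<^esub>" using pi_N generate.one by metis

definition "x = pi f1"
definition "y = pi f2"
definition "z = pi f3"

lemma xyz: "x \<in> carrier Q" "y \<in> carrier Q" "z \<in> carrier Q"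
  unfolding x_def y_def z_def using pi_closed fin by auto

lemma Q_yx: "y \<otimes>\<^bsub>Q\<^esub> x = x \<otimes>\<^bsub>Q\<^esub> y \<otimes>\<^bsub>Q\<^esub> z"
  unfolding x_def y_def z_def using r21 fin pi_mult by (metis m_closed)
lemma Q_zx: "z \<otimes>\<^bsub>Q\<^esub> x = x \<otimes>\<^bsub>Q\<^esub> z"
proof -
  have "z \<otimes>\<^bsub>Q\<^esub> x = x \<otimes>\<^bsub>Q\<^esub> z \<otimes>\<^bsub>Q\<^esub> pi f4"
    unfolding x_def y_def z_def using r31 fin pi_mult by (metis m_closed)
  then show ?thesis using pi_N[OF f4N] monoid.r_one[OF group.is_monoid[OF grpQ]] xyz monoid.m_closed[OF group.is_monoid[OF grpQ]] by metis
qed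
lemma Q_zy: "z \<otimes>\<^bsub>Q\<^esub> y = y \<otimes>\<^bsub>Q\<^esub> z"
proof -
  have "z \<otimes>\<^bsub>Q\<^esub> y = y \<otimes>\<^bsub>Q\<^esub> z \<otimes>\<^bsub>Q\<^esub> pi f5"
    unfolding x_def y_def z_def using r32 fin pi_mult by (metis m_closed)
  then show ?thesis using pi_N[OF f5N] monoid.r_one[OF group.is_monoid[OF grpQ]] xyz monoid.m_closed[OF group.is_monoid[OF grpQ]] by metis
qed

lemma Q_exp: "q \<in> carrier Q \<Longrightarrow> q [^]\<^bsub>Q\<^esub> p = \<one>\<^bsub>Q\<^esub>"
  using iii4 unfolding has_exponent_def by blast

lemma cardQ: "card (carrier Q) = p ^ 3" using iii2 by (simp add: order_def)
lemma finQ: "finite (carrier Q)"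
proof -
  have "card (carrier Q) > 0" using cardQ p_gt1 by simp
  then show ?thesis by (rule card_ge_0_finite)
qed

lemma genQ: "carrier Q \<subseteq> generate Q {x, y, z}"
proof
  fix q assume "q \<in> carrier Q"
  then obtain g where g: "g \<in> carrier G" "q = pi g"
    unfolding pi_def by (auto simp: carrier_FactGroup)
  have "g \<in> generate G {f1, f2, f3, f4, f5}" using g gen by simp
  have oneQ: "\<one>\<^bsub>Q\<^esub> \<in> generate Q {x, y, z}" by (rule generate.one)
  then have oneQ': "N \<in> generate Q {x, y, z}" by simp
  from \<open>g \<in> generate G _\<close> have "pi g \<in> generate Q {x, y, z}"
  proof (induction rule: generate.induct)
    case one then show ?case using pi_one oneQ by simp
  next
    case (incl h)
    then show ?case using pi_N[OF f4N] pi_N[OF f5N] oneQ' generate.incl[of _ "{x,y,z}" Q]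
      unfolding x_def y_def z_def by auto
  next
    case (inv h)
    then have hc: "h \<in> carrier G" using fin by auto
    have "inv\<^bsub>Q\<^esub> (pi h) \<in> generate Q {x, y, z}"
      using inv pi_N[OF f4N] pi_N[OF f5N] oneQ' generate.inv[of _ "{x,y,z}" Q]
        monoid.inv_one[OF group.is_monoid[OF grpQ]] unfolding x_def y_def z_def by auto
    then show ?case using pi_inv[OF hc] by simp
  next
    case (eng h1 h2)
    have "h1 \<in> carrier G" "h2 \<in> carrier G" using eng.hyps gen by auto
    then show ?case using eng.IH pi_mult generate.eng by metis
  qed
  then show "q \<in> generate Q {x, y, z}" using g by simp
qed

lemma heisQ: "heis Q p x y z"
  unfolding heis_def heis_axioms_def
  using grpQ p_prime xyz Q_yx Q_zx Q_zy Q_exp finQ cardQ genQ by blast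

end



context L begin

lemma f45: "f4 \<otimes> f5 = f5 \<otimes> f4" using c5 fin by simp

lemma pw45_mult: "(f4 [^] s \<otimes> f5 [^] t) \<otimes> (f4 [^] s2 \<otimes> f5 [^] t2) = f4 [^] ((s::nat) + s2) \<otimes> f5 [^] ((t::nat) + t2)"
proof -
  have e: "f5 [^] t \<otimes> f4 [^] s2 = f4 [^] s2 \<otimes> f5 [^] t" using pow_comm2[OF f45[symmetric]] fin by simp
  have "(f4 [^] s \<otimes> f5 [^] t) \<otimes> (f4 [^] s2 \<otimes> f5 [^] t2) = f4 [^] s \<otimes> ((f5 [^] t \<otimes> f4 [^] s2) \<otimes> f5 [^] t2)"
    using fin by (simp add: m_assoc)
  also have "\<dots> = f4 [^] s \<otimes> ((f4 [^] s2 \<otimes> f5 [^] t) \<otimes> f5 [^] t2)" using e by simp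
  also have "\<dots> = (f4 [^] s \<otimes> f4 [^] s2) \<otimes> (f5 [^] t \<otimes> f5 [^] t2)" using fin by (simp add: m_assoc)
  also have "\<dots> = f4 [^] (s + s2) \<otimes> f5 [^] (t + t2)" using fin by (simp add: nat_pow_mult)
  finally show ?thesis .
qed

lemma N_pow: "a \<in> N \<Longrightarrow> a [^] (n::nat) \<in> N"
  by (induction n) (auto intro: subgroup.m_closed[OF N_sub] subgroup.one_closed[OF N_sub])

lemma Nform: "n \<in> N \<Longrightarrow> \<exists>s t. n = f4 [^] (s::nat) \<otimes> f5 [^] (t::nat)"
proof (induction rule: generate.induct)
  case one
  then show ?case by (intro exI[of _ 0]) simp
next
  case (incl h)
  then show ?case
  proof
    assume "h = f4" then show ?thesis using fin by (intro exI[of _ 1] exI[of _ 0]) simp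
  next
    assume "h \<in> {f5}" then show ?thesis using fin by (intro exI[of _ 0] exI[of _ 1]) simp
  qed
next
  case (inv h)
  have i4: "inv f4 = f4 [^] (p - 1)" using inv_pow_gen[OF fin(4) i1(1)] p_gt1 by simp
  have i5: "inv f5 = f5 [^] (p - 1)" using inv_pow_gen[OF fin(5) i1(2)] p_gt1 by simp
  from inv show ?case
  proof
    assume "h = f4" then show ?thesis using fin i4 by (intro exI[of _ "p - 1"] exI[of _ 0]) simp
  next
    assume "h \<in> {f5}" then show ?thesis using fin i5 by (intro exI[of _ 0] exI[of _ "p - 1"]) simp
  qed
next
  case (eng h1 h2)
  then obtain s t s2 t2 where "h1 = f4 [^] (s::nat) \<otimes> f5 [^] (t::nat)" "h2 = f4 [^] (s2::nat) \<otimes> f5 [^] (t2::nat)"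
    by blast
  then show ?case using pw45_mult by blast
qed

definition P4 :: "'a set" where
  "P4 = (\<lambda>(s,t). f4 [^] s \<otimes> f5 [^] t) ` ({0..<p} \<times> {0..<p})"

lemma card_N: "card N = p * p"
proof -
  have "card (carrier (G\<lparr>carrier := N\<rparr>)) = card (carrier (integer_mod_group p \<times>\<times> integer_mod_group p))"
    using iso_same_card[OF iii1] .
  then show ?thesis using p_gt1 by (simp add: carrier_integer_mod_group card_cartesian_product)
qed

lemma N_P4: "N = P4"
proof
  show "N \<subseteq> P4"
  proof
    fix n assume "n \<in> N"
    then obtain s t where st: "n = f4 [^] (s::nat) \<otimes> f5 [^] (t::nat)" using Nform by blast
    then have "n = f4 [^] (s mod p) \<otimes> f5 [^] (t mod p)"
      using pow_mod_p[OF fin(4) i1(1)] pow_mod_p[OF fin(5) i1(2)] by metis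
    moreover have "(s mod p, t mod p) \<in> {0..<p} \<times> {0..<p}" using p_gt1 by simp
    ultimately show "n \<in> P4" unfolding P4_def by force
  qed
  show "P4 \<subseteq> N"
  proof -
    have "f4 [^] (s::nat) \<otimes> f5 [^] (t::nat) \<in> N" for s t
      using subgroup.m_closed[OF N_sub] N_pow f4N f5N by metis
    then show ?thesis unfolding P4_def by auto
  qed
qed

lemma P4_inj: "inj_on (\<lambda>(s,t). f4 [^] s \<otimes> f5 [^] t) ({0..<p} \<times> {0..<p})"
proof (rule eq_card_imp_inj_on)
  show "finite ({0..<p} \<times> {0..<(p::nat)})" by simp
  show "card ((\<lambda>(s,t). f4 [^] s \<otimes> f5 [^] t) ` ({0..<p} \<times> {0..<p})) = card ({0..<p} \<times> {0..<(p::nat)})"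
    using N_P4 card_N unfolding P4_def by (simp add: card_cartesian_product)
qed

lemma N_indep:
  assumes "f4 [^] (s1::nat) \<otimes> f5 [^] (t1::nat) = f4 [^] (s2::nat) \<otimes> f5 [^] (t2::nat)"
  shows "s1 mod p = s2 mod p \<and> t1 mod p = t2 mod p"
proof -
  have "f4 [^] (s1 mod p) \<otimes> f5 [^] (t1 mod p) = f4 [^] (s2 mod p) \<otimes> f5 [^] (t2 mod p)"
    using assms pow_mod_p[OF fin(4) i1(1)] pow_mod_p[OF fin(5) i1(2)] by metis
  moreover have "(s1 mod p, t1 mod p) \<in> {0..<p} \<times> {0..<p}" "(s2 mod p, t2 mod p) \<in> {0..<p} \<times> {0..<p}"
    using p_gt1 by auto
  ultimately have "(s1 mod p, t1 mod p) = (s2 mod p, t2 mod p)"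
    using inj_onD[OF P4_inj, of "(s1 mod p, t1 mod p)" "(s2 mod p, t2 mod p)"] by simp
  then show ?thesis by simp
qed

end



lemma (in group) comm_mult2:
  assumes "a \<otimes> b = b \<otimes> a" "a \<otimes> c = c \<otimes> a" "a \<in> carrier G" "b \<in> carrier G" "c \<in> carrier G"
  shows "a \<otimes> (b \<otimes> c) = (b \<otimes> c) \<otimes> a"
proof -
  have "a \<otimes> (b \<otimes> c) = (a \<otimes> b) \<otimes> c" using assms(3-5) by (simp add: m_assoc)
  also have "\<dots> = b \<otimes> (a \<otimes> c)" using assms by (metis m_assoc)
  also have "\<dots> = (b \<otimes> c) \<otimes> a" using assms by (metis m_assoc)
  finally show ?thesis .
qed

context L begin

definition el :: "nat \<Rightarrow> nat \<Rightarrow> nat \<Rightarrow> 'a" where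
  "el j s t = f3 [^] j \<otimes> (f4 [^] s \<otimes> f5 [^] t)"

lemma el_closed[simp]: "el j s t \<in> carrier G" using fin by (simp add: el_def)

lemma c5pow: "g \<in> carrier G \<Longrightarrow> f5 [^] (t::nat) \<otimes> g = g \<otimes> f5 [^] t"
  using group_commutes_pow[of f5 g t] c5[of g] fin by simp

lemma c45_3: "(f4 [^] (s::nat) \<otimes> f5 [^] (t::nat)) \<otimes> f3 [^] (j::nat) = f3 [^] j \<otimes> (f4 [^] s \<otimes> f5 [^] t)"
proof -
  have a: "f3 [^] j \<otimes> f4 [^] s = f4 [^] s \<otimes> f3 [^] j" using pow_comm2[of f3 f4 j s] r43 fin by simp
  have b: "f3 [^] j \<otimes> f5 [^] t = f5 [^] t \<otimes> f3 [^] j" using c5pow[of "f3 [^] j" t] fin by simp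
  show ?thesis using comm_mult2[OF a b] fin by simp
qed

lemma el_mult: "el j s t \<otimes> el j2 s2 t2 = el (j + j2) (s + s2) (t + t2)"
proof -
  have "el j s t \<otimes> el j2 s2 t2 = f3 [^] j \<otimes> ((f4 [^] s \<otimes> f5 [^] t) \<otimes> f3 [^] j2) \<otimes> (f4 [^] s2 \<otimes> f5 [^] t2)"
    using fin by (simp add: el_def m_assoc)
  also have "\<dots> = (f3 [^] j \<otimes> f3 [^] j2) \<otimes> ((f4 [^] s \<otimes> f5 [^] t) \<otimes> (f4 [^] s2 \<otimes> f5 [^] t2))"
    using fin c45_3 by (simp add: m_assoc)
  also have "\<dots> = el (j + j2) (s + s2) (t + t2)" using fin pw45_mult by (simp add: el_def nat_pow_mult)
  finally show ?thesis .
qed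

lemma el_comm: "el j s t \<otimes> el j2 s2 t2 = el j2 s2 t2 \<otimes> el j s t"
  using el_mult by (simp add: add.commute)

lemma f3_el: "f3 [^] j = el j 0 0" using fin by (simp add: el_def)
lemma f5_el: "f5 [^] t = el 0 0 t" using fin by (simp add: el_def)

lemma f3j_f2: "f3 [^] (j::nat) \<otimes> f2 = f2 \<otimes> el j 0 j"
proof (induction j)
  case 0 then show ?case using fin by (simp add: el_def)
next
  case (Suc j)
  have "f3 [^] Suc j \<otimes> f2 = f3 [^] j \<otimes> (f3 \<otimes> f2)" using fin by (simp add: m_assoc)
  also have "\<dots> = (f3 [^] j \<otimes> f2) \<otimes> (f3 \<otimes> f5)" using fin r32 by (simp add: m_assoc)
  also have "\<dots> = f2 \<otimes> (el j 0 j \<otimes> el 1 0 1)" using Suc fin by (simp add: el_def m_assoc)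
  also have "\<dots> = f2 \<otimes> el (Suc j) 0 (Suc j)" by (simp add: el_mult)
  finally show ?case .
qed

lemma el_f2: "el j s t \<otimes> f2 = f2 \<otimes> el j s (t + j)"
proof -
  have a: "f2 \<otimes> f4 [^] s = f4 [^] s \<otimes> f2" using pow_comm2[of f4 f2 s 1] r42 fin by simp
  have b: "f2 \<otimes> f5 [^] t = f5 [^] t \<otimes> f2" using c5pow[of f2 t] fin by simp
  have "el j s t \<otimes> f2 = f3 [^] j \<otimes> ((f4 [^] s \<otimes> f5 [^] t) \<otimes> f2)" using fin by (simp add: el_def m_assoc)
  also have "\<dots> = (f3 [^] j \<otimes> f2) \<otimes> (f4 [^] s \<otimes> f5 [^] t)" using comm_mult2[OF a b] fin by (simp add: m_assoc)
  also have "\<dots> = f2 \<otimes> (el j 0 j \<otimes> el 0 s t)" using f3j_f2 fin by (simp add: el_def m_assoc)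
  also have "\<dots> = f2 \<otimes> el j s (t + j)" by (simp add: el_mult add.commute)
  finally show ?thesis .
qed

lemma el_f2pow: "el j s t \<otimes> f2 [^] (b::nat) = f2 [^] b \<otimes> el j s (t + b * j)"
proof (induction b arbitrary: t)
  case 0 then show ?case by simp
next
  case (Suc b)
  have "el j s t \<otimes> f2 [^] Suc b = (el j s t \<otimes> f2 [^] b) \<otimes> f2" using fin by (simp add: m_assoc)
  also have "\<dots> = f2 [^] b \<otimes> (el j s (t + b * j) \<otimes> f2)" using Suc fin by (simp add: m_assoc)
  also have "\<dots> = f2 [^] Suc b \<otimes> el j s (t + Suc b * j)" using el_f2 fin by (simp add: m_assoc add_ac)
  finally show ?case .
qed

lemma f3j_f1: "f3 [^] (j::nat) \<otimes> f1 = f1 \<otimes> el j j 0"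
proof (induction j)
  case 0 then show ?case using fin by (simp add: el_def)
next
  case (Suc j)
  have "f3 [^] Suc j \<otimes> f1 = f3 [^] j \<otimes> (f3 \<otimes> f1)" using fin by (simp add: m_assoc)
  also have "\<dots> = (f3 [^] j \<otimes> f1) \<otimes> (f3 \<otimes> f4)" using fin r31 by (simp add: m_assoc)
  also have "\<dots> = f1 \<otimes> (el j j 0 \<otimes> el 1 1 0)" using Suc fin by (simp add: el_def m_assoc)
  also have "\<dots> = f1 \<otimes> el (Suc j) (Suc j) 0" by (simp add: el_mult)
  finally show ?case .
qed

lemma f4s_f1: "f4 [^] (s::nat) \<otimes> f1 = f1 \<otimes> el 0 s s"
proof (induction s)
  case 0 then show ?case using fin by (simp add: el_def)
next
  case (Suc s)
  have "f4 [^] Suc s \<otimes> f1 = f4 [^] s \<otimes> (f4 \<otimes> f1)" using fin by (simp add: m_assoc)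
  also have "\<dots> = (f4 [^] s \<otimes> f1) \<otimes> (f4 \<otimes> f5)" using fin r41 by (simp add: m_assoc)
  also have "\<dots> = f1 \<otimes> (el 0 s s \<otimes> el 0 1 1)" using Suc fin by (simp add: el_def m_assoc)
  also have "\<dots> = f1 \<otimes> el 0 (Suc s) (Suc s)" by (simp add: el_mult)
  finally show ?case .
qed

lemma el_f1: "el j s t \<otimes> f1 = f1 \<otimes> el j (s + j) (t + s)"
proof -
  have "el j s t \<otimes> f1 = f3 [^] j \<otimes> (f4 [^] s \<otimes> (f5 [^] t \<otimes> f1))" using fin by (simp add: el_def m_assoc)
  also have "\<dots> = f3 [^] j \<otimes> ((f4 [^] s \<otimes> f1) \<otimes> f5 [^] t)" using fin c5pow[of f1 t] by (simp add: m_assoc)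
  also have "\<dots> = (f3 [^] j \<otimes> f1) \<otimes> (el 0 s s \<otimes> el 0 0 t)" using fin f4s_f1 by (simp add: m_assoc el_def)
  also have "\<dots> = f1 \<otimes> (el j j 0 \<otimes> (el 0 s s \<otimes> el 0 0 t))" using fin f3j_f1 by (simp add: m_assoc)
  also have "\<dots> = f1 \<otimes> el j (s + j) (t + s)" by (simp add: el_mult add.commute)
  finally show ?thesis .
qed

lemma el_f1pow: "\<exists>t'. el j s t \<otimes> f1 [^] (a::nat) = f1 [^] a \<otimes> el j (s + a * j) t'"
proof (induction a arbitrary: s t)
  case 0 then show ?case by auto
next
  case (Suc a)
  obtain t' where t': "el j s t \<otimes> f1 [^] a = f1 [^] a \<otimes> el j (s + a * j) t'" using Suc by blast
  have "el j s t \<otimes> f1 [^] Suc a = (el j s t \<otimes> f1 [^] a) \<otimes> f1" using fin by (simp add: m_assoc)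
  also have "\<dots> = f1 [^] a \<otimes> (el j (s + a * j) t' \<otimes> f1)" using t' fin by (simp add: m_assoc)
  also have "\<dots> = f1 [^] Suc a \<otimes> el j (s + Suc a * j) (t' + (s + a * j))" using el_f1 fin by (simp add: m_assoc add_ac)
  finally show ?case by blast
qed

lemma el_eq:
  assumes "el j s t = el j s2 t2"
  shows "s mod p = s2 mod p \<and> t mod p = t2 mod p"
proof -
  have "f4 [^] s \<otimes> f5 [^] t = f4 [^] s2 \<otimes> f5 [^] t2" using assms fin by (simp add: el_def)
  then show ?thesis by (rule N_indep)
qed

end



lemma exists_inv_mod:
  fixes p a b :: nat
  assumes "Factorial_Ring.prime p" "\<not> p dvd a"
  shows "\<exists>n. p dvd (b + n * a)"
proof -
  have "coprime a p" using prime_imp_coprime[OF assms] by (simp add: coprime_commute)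
  then have g: "gcd a p = 1" by simp
  have a0: "a \<noteq> 0" using assms(2) by (metis dvd_0_right)
  obtain u v where uv: "a * u = p * v + gcd a p" using bezout_nat[OF a0, of p] by blast
  then have uv': "a * u = p * v + 1" using g by simp
  obtain q where q: "p = Suc q" using assms by (metis not0_implies_Suc prime_gt_0_nat not_gr0)
  have "b + (u * q * b) * a = b + q * b * (a * u)" by (simp add: algebra_simps)
  also have "\<dots> = b + q * b * (p * v + 1)" using uv' by simp
  also have "\<dots> = p * (b + q * b * v)" using q by (simp add: algebra_simps)
  finally show ?thesis by (intro exI[of _ "u * q * b"]) simp
qed

lemma lin:
  fixes p a1 a2 a3 b1 b2 b3 :: nat
  assumes pr: "Factorial_Ring.prime p" and "a1 < p" "a2 < p" "\<not> (a1 = 0 \<and> a2 = 0)"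
    and m: "(a3 + b3 + b1 * a2) mod p = (b3 + a3 + a1 * b2) mod p"
  shows "\<exists>n. (b1 + n * a1) mod p = 0 \<and> (b2 + n * a2) mod p = 0"
proof -
  have "(int a3 + int b3 + int b1 * int a2) mod int p = (int b3 + int a3 + int a1 * int b2) mod int p"
    using m by (metis of_nat_add of_nat_mult zmod_int)
  then have D: "int p dvd (int b1 * int a2 - int a1 * int b2)"
    by (simp add: mod_eq_dvd_iff algebra_simps)
  have pi: "Factorial_Ring.prime (int p)" using pr by simp
  show ?thesis
  proof (cases "a1 = 0")
    case False
    then have "\<not> p dvd a1" using assms(2) by (auto dest: dvd_imp_le)
    then obtain n where n: "p dvd (b1 + n * a1)" using exists_inv_mod[OF pr] by blast
    then have n': "int p dvd (int b1 + int n * int a1)" by (metis of_nat_add of_nat_mult of_nat_dvd_iff)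
    have "int a1 * (int b2 + int n * int a2) = int a2 * (int b1 + int n * int a1) - (int b1 * int a2 - int a1 * int b2)"
      by (simp add: algebra_simps)
    then have "int p dvd int a1 * (int b2 + int n * int a2)" using D n' by simp
    moreover have "\<not> int p dvd int a1" using \<open>\<not> p dvd a1\<close> by simp
    ultimately have "int p dvd (int b2 + int n * int a2)" using pi prime_dvd_mult_iff by blast
    then have "p dvd (b2 + n * a2)" by (metis of_nat_add of_nat_mult of_nat_dvd_iff)
    then show ?thesis using n by (intro exI[of _ n]) (simp add: dvd_eq_mod_eq_0)
  next
    case True
    then have "a2 \<noteq> 0" using assms by auto
    then have na2: "\<not> p dvd a2" using assms(3) by (auto dest: dvd_imp_le)
    then obtain n where n: "p dvd (b2 + n * a2)" using exists_inv_mod[OF pr] by blast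
    have "int p dvd int b1 * int a2" using D True by simp
    moreover have "\<not> int p dvd int a2" using na2 by simp
    ultimately have "int p dvd int b1" using pi prime_dvd_mult_iff by blast
    then have "p dvd b1" by simp
    then show ?thesis using n True by (intro exI[of _ n]) (simp add: dvd_eq_mod_eq_0)
  qed
qed

context L begin

interpretation Hq: heis Q p x y z by (rule heisQ)

lemma pi_E: "Hq.E (a1, a2, a3) = pi (f1 [^] a1 \<otimes> f2 [^] a2 \<otimes> f3 [^] a3)"
  unfolding Hq.E_def using fin by (simp add: pi_mult pi_pow x_def y_def z_def)

lemma coset_eq:
  assumes "g \<in> carrier G" "w \<in> carrier G" "pi g = pi w"
  shows "\<exists>n\<in>N. g = n \<otimes> w"
proof -
  have "g \<in> N #> g" using rcos_self[OF assms(1) N_sub] .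
  then have "g \<in> N #> w" using assms(3) by (simp add: pi_def)
  then show ?thesis unfolding r_coset_def by blast
qed

lemma N_el: "n \<in> N \<Longrightarrow> \<exists>s t. n = el 0 s t"
  using Nform fin by (auto simp: el_def)

end



context L begin

interpretation Hq: heis Q p x y z by (rule heisQ)

lemma dvd_from_mod:
  fixes s k :: nat
  assumes "s mod p = (s + k) mod p" shows "p dvd k"
proof -
  have "(s + k) mod p = s mod p" using assms by simp
  then have "p dvd (s + k) - s" using mod_eq_dvd_iff_nat[of s "s + k" p] by simp
  then show ?thesis by simp
qed

lemma Mlem:
  assumes g: "g \<in> carrier G" and m: "m \<in> carrier G" and gm: "g \<otimes> m = m \<otimes> g"
    and pm: "pi m = z [^]\<^bsub>Q\<^esub> j" and j: "j < p" and cg: "Hq.coord (pi g) = (a1, a2, a3)"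
  shows "j = 0 \<or> (a1 = 0 \<and> a2 = 0)"
proof -
  have abox: "a1 < p" "a2 < p" using Hq.coord_in[OF pi_closed[OF g]] cg by (auto simp: Hq.box_mem)
  define W where "W = f1 [^] a1 \<otimes> f2 [^] a2"
  have Wc: "W \<in> carrier G" using fin by (simp add: W_def)
  have "pi g = Hq.E (a1, a2, a3)" using Hq.E_coord[OF pi_closed[OF g]] cg by simp
  also have "\<dots> = pi (W \<otimes> f3 [^] a3)" unfolding W_def by (rule pi_E)
  finally have pg: "pi g = pi (W \<otimes> f3 [^] a3)" .
  have wc: "W \<otimes> f3 [^] a3 \<in> carrier G" using Wc fin by simp
  from coset_eq[OF g wc pg] obtain n0 where n0: "n0 \<in> N" "g = n0 \<otimes> (W \<otimes> f3 [^] a3)" by blast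
  from N_el[OF n0(1)] obtain s0 t0 where st0: "n0 = el 0 s0 t0" by blast
  have "pi m = pi (f3 [^] j)" using pm pi_pow fin by (simp add: z_def)
  moreover have "f3 [^] j \<in> carrier G" using fin by simp
  ultimately obtain n1 where n1: "n1 \<in> N" "m = n1 \<otimes> f3 [^] j" using coset_eq[OF m] by blast
  from N_el[OF n1(1)] obtain s t where st: "n1 = el 0 s t" by blast
  have mel: "m = el j s t" using n1(2) st f3_el el_mult by simp
  have g': "g = el 0 s0 t0 \<otimes> (W \<otimes> el a3 0 0)" using n0(2) st0 f3_el by simp
  have e1: "g \<otimes> m = el 0 s0 t0 \<otimes> (W \<otimes> (el j s t \<otimes> el a3 0 0))"
    using g' mel Wc el_comm[of a3 0 0 j s t] by (simp add: m_assoc)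
  have e2: "m \<otimes> g = el 0 s0 t0 \<otimes> (el j s t \<otimes> (W \<otimes> el a3 0 0))"
  proof -
    have "m \<otimes> g = (el j s t \<otimes> el 0 s0 t0) \<otimes> (W \<otimes> el a3 0 0)" using g' mel Wc by (simp add: m_assoc)
    also have "\<dots> = (el 0 s0 t0 \<otimes> el j s t) \<otimes> (W \<otimes> el a3 0 0)" using el_comm[of j s t 0 s0 t0] by simp
    also have "\<dots> = el 0 s0 t0 \<otimes> (el j s t \<otimes> (W \<otimes> el a3 0 0))" using Wc by (simp add: m_assoc)
    finally show ?thesis .
  qed
  have "W \<otimes> (el j s t \<otimes> el a3 0 0) = el j s t \<otimes> (W \<otimes> el a3 0 0)"
    using e1 e2 gm Wc by simp
  then have "(W \<otimes> el j s t) \<otimes> el a3 0 0 = (el j s t \<otimes> W) \<otimes> el a3 0 0"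
    using Wc by (simp add: m_assoc)
  then have WM: "W \<otimes> el j s t = el j s t \<otimes> W" using Wc by simp
  obtain t' where t': "el j s t \<otimes> f1 [^] a1 = f1 [^] a1 \<otimes> el j (s + a1 * j) t'"
    using el_f1pow by blast
  have "el j s t \<otimes> W = f1 [^] a1 \<otimes> (el j (s + a1 * j) t' \<otimes> f2 [^] a2)"
    using t' fin by (simp add: W_def m_assoc[symmetric])
  also have "\<dots> = W \<otimes> el j (s + a1 * j) (t' + a2 * j)" using el_f2pow fin by (simp add: W_def m_assoc)
  finally have "el j s t \<otimes> W = W \<otimes> el j (s + a1 * j) (t' + a2 * j)" .
  then have "W \<otimes> el j s t = W \<otimes> el j (s + a1 * j) (t' + a2 * j)" using WM by simp
  then have "el j s t = el j (s + a1 * j) (t' + a2 * j)" using Wc by simp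
  then have "p dvd a1 * j" using el_eq dvd_from_mod by blast
  show ?thesis
  proof (cases "j = 0")
    case True then show ?thesis by simp
  next
    case False
    have pr: "Factorial_Ring.prime p" by (rule p_prime)
    have nj: "\<not> p dvd j" using False j by (auto dest: dvd_imp_le)
    have "p dvd a1" using \<open>p dvd a1 * j\<close> nj pr prime_dvd_mult_iff by blast
    then have a10: "a1 = 0" using abox by (auto dest: dvd_imp_le)
    have "el j s t \<otimes> W = W \<otimes> el j s (t + a2 * j)" using el_f2pow a10 fin by (simp add: W_def)
    then have "W \<otimes> el j s t = W \<otimes> el j s (t + a2 * j)" using WM by simp
    then have "el j s t = el j s (t + a2 * j)" using Wc by simp
    then have "p dvd a2 * j" using el_eq dvd_from_mod by blast
    then have "p dvd a2" using nj pr prime_dvd_mult_iff by blast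
    then have "a2 = 0" using abox by (auto dest: dvd_imp_le)
    then show ?thesis using a10 by simp
  qed
qed

end



context L begin

interpretation Hq: heis Q p x y z by (rule heisQ)

lemma Klem:
  assumes a: "a \<in> carrier G" and b: "b \<in> carrier G" and ab: "a \<otimes> b = b \<otimes> a"
    and ca: "Hq.coord (pi a) = (a1, a2, a3)" and nz: "\<not> (a1 = 0 \<and> a2 = 0)"
  shows "\<exists>k::nat. pi b = pi a [^]\<^bsub>Q\<^esub> k"
proof -
  obtain b1 b2 b3 where cb: "Hq.coord (pi b) = (b1, b2, b3)" by (cases "Hq.coord (pi b)") auto
  have pa: "pi a \<in> carrier Q" and pb: "pi b \<in> carrier Q" using pi_closed a b by auto
  have abox: "a1 < p" "a2 < p" using Hq.coord_in[OF pa] ca by (auto simp: Hq.box_mem)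
  have "pi a \<otimes>\<^bsub>Q\<^esub> pi b = pi b \<otimes>\<^bsub>Q\<^esub> pi a" using ab pi_mult a b by metis
  then have "(a3 + b3 + b1 * a2) mod p = (b3 + a3 + a1 * b2) mod p"
    using Hq.coord_comm[OF pa pb _ ca cb] by simp
  from lin[OF p_prime abox nz this] obtain n :: nat where n0: "(b1 + n * a1) mod p = 0 \<and> (b2 + n * a2) mod p = 0"
    by (elim exE)
  then have n: "(b1 + n * a1) mod p = 0" "(b2 + n * a2) mod p = 0" by auto
  define m where "m = b \<otimes> a [^] n"
  have mc: "m \<in> carrier G" using a b by (simp add: m_def)
  have pm: "pi m = pi b \<otimes>\<^bsub>Q\<^esub> pi a [^]\<^bsub>Q\<^esub> n" using a b pi_mult pi_pow by (simp add: m_def)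
  obtain c' where cp: "Hq.coord (pi a [^]\<^bsub>Q\<^esub> n) = ((n * a1) mod p, (n * a2) mod p, c')"
    using Hq.coord_pow[OF pa ca, of n] by (cases "Hq.coord (pi a [^]\<^bsub>Q\<^esub> n)") auto
  have "Hq.coord (pi m) = ((b1 + n * a1 mod p) mod p, (b2 + n * a2 mod p) mod p, (b3 + c' + n * a1 mod p * b2) mod p)"
    unfolding pm using Hq.coord_mult[OF pb _ cb cp] pa by simp
  then have cm: "fst (Hq.coord (pi m)) = 0" "fst (snd (Hq.coord (pi m))) = 0"
    using n by (simp_all add: mod_add_right_eq)
  define j where "j = snd (snd (Hq.coord (pi m)))"
  have pmz: "pi m = z [^]\<^bsub>Q\<^esub> j" "j < p" using Hq.coord_zero12[OF pi_closed[OF mc] cm] j_def by auto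
  have am: "a \<otimes> m = m \<otimes> a"
  proof -
    have "a \<otimes> m = (a \<otimes> b) \<otimes> a [^] n" using a b by (simp add: m_def m_assoc)
    also have "\<dots> = b \<otimes> (a \<otimes> a [^] n)" using ab a b by (simp add: m_assoc)
    also have "\<dots> = b \<otimes> (a [^] n \<otimes> a)" using a nat_pow_Suc2[of a n] by simp
    also have "\<dots> = m \<otimes> a" using a b by (simp add: m_def m_assoc)
    finally show ?thesis .
  qed
  have "j = 0" using Mlem[OF a mc am pmz ca] nz by blast
  then have "pi b \<otimes>\<^bsub>Q\<^esub> pi a [^]\<^bsub>Q\<^esub> n = \<one>\<^bsub>Q\<^esub>" using pmz pm by simp
  then have "pi b = inv\<^bsub>Q\<^esub> (pi a [^]\<^bsub>Q\<^esub> n)" using pa pb by (simp add: Hq.inv_char Hq.inv_equality)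
  also have "\<dots> = (pi a [^]\<^bsub>Q\<^esub> n) [^]\<^bsub>Q\<^esub> (p - 1)"
    using Hq.inv_pow_gen[OF _ Q_exp] pa p_gt1 by simp
  also have "\<dots> = pi a [^]\<^bsub>Q\<^esub> (n * (p - 1))" using pa by (simp add: Hq.nat_pow_pow)
  finally show ?thesis by blast
qed

end



context L begin

interpretation Hq: heis Q p x y z by (rule heisQ)

definition cG :: "'a \<Rightarrow> 'a \<Rightarrow> rat" where "cG g h = Hq.beta (pi g) (pi h)"

lemma cG_cocycle: "cocycle2 G cG"
  unfolding cocycle2_def
proof (intro ballI)
  fix g h k assume g: "g \<in> carrier G" and h: "h \<in> carrier G" and k: "k \<in> carrier G"
  have "qz_eq (Hq.beta (pi h) (pi k) - Hq.beta (pi g \<otimes>\<^bsub>Q\<^esub> pi h) (pi k)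
     + Hq.beta (pi g) (pi h \<otimes>\<^bsub>Q\<^esub> pi k) - Hq.beta (pi g) (pi h)) 0"
    using Hq.beta_cocycle pi_closed g h k unfolding cocycle2_def by blast
  then show "qz_eq (cG h k - cG (g \<otimes> h) k + cG g (h \<otimes> k) - cG g h) 0"
    unfolding cG_def using pi_mult g h k by simp
qed

lemma cyc_image:
  assumes u: "u \<in> carrier Q" and a: "a \<in> carrier G" and b: "b \<in> carrier G"
    and ia: "pi a = u [^]\<^bsub>Q\<^esub> (ka::nat)" and ib: "pi b = u [^]\<^bsub>Q\<^esub> (kb::nat)"
  shows "\<forall>g\<in>generate G {a, b}. \<exists>i::nat. pi g = u [^]\<^bsub>Q\<^esub> i"
proof
  fix g assume "g \<in> generate G {a, b}"
  then show "\<exists>i::nat. pi g = u [^]\<^bsub>Q\<^esub> i"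
  proof (induction rule: generate.induct)
    case one then show ?case using pi_one by (intro exI[of _ 0]) simp
  next
    case (incl h) then show ?case using ia ib by auto
  next
    case (inv h)
    then have hc: "h \<in> carrier G" and "\<exists>i::nat. pi h = u [^]\<^bsub>Q\<^esub> i" using ia ib a b by auto
    then obtain i :: nat where i: "pi h = u [^]\<^bsub>Q\<^esub> i" by blast
    have "pi (inv h) = inv\<^bsub>Q\<^esub> (u [^]\<^bsub>Q\<^esub> i)" using pi_inv[OF hc] i by simp
    also have "\<dots> = (u [^]\<^bsub>Q\<^esub> i) [^]\<^bsub>Q\<^esub> (p - 1)"
      using Hq.inv_pow_gen[OF _ Q_exp] u p_gt1 by simp
    also have "\<dots> = u [^]\<^bsub>Q\<^esub> (i * (p - 1))" using u by (simp add: Hq.nat_pow_pow)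
    finally show ?case by blast
  next
    case (eng h1 h2)
    have "generate G {a, b} \<subseteq> carrier G" using a b by (intro generate_incl) auto
    then have hc: "h1 \<in> carrier G" "h2 \<in> carrier G" using eng.hyps by auto
    obtain i :: nat where i: "pi h1 = u [^]\<^bsub>Q\<^esub> i" using eng.IH by blast
    obtain j :: nat where j: "pi h2 = u [^]\<^bsub>Q\<^esub> j" using eng.IH by blast
    have "pi (h1 \<otimes> h2) = u [^]\<^bsub>Q\<^esub> i \<otimes>\<^bsub>Q\<^esub> u [^]\<^bsub>Q\<^esub> j" using pi_mult[OF hc] i j by simp
    also have "\<dots> = u [^]\<^bsub>Q\<^esub> (i + j)" by (rule Hq.nat_pow_mult[OF u])
    finally have "pi (h1 \<otimes> h2) = u [^]\<^bsub>Q\<^esub> (i + j)" .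
    then show ?case by blast
  qed
qed

lemma bicyc:
  assumes "bicyclic_subgroup G A"
  shows "coboundary2 (G\<lparr>carrier := A\<rparr>) cG"
proof -
  from assms obtain a b where a: "a \<in> carrier G" and b: "b \<in> carrier G" and A: "A = generate G {a, b}"
    and cm: "\<forall>x\<in>A. \<forall>y\<in>A. x \<otimes> y = y \<otimes> x" and sg: "subgroup A G"
    unfolding bicyclic_subgroup_def by blast
  have ab: "a \<otimes> b = b \<otimes> a" using cm A generate.incl[of a "{a,b}" G] generate.incl[of b "{a,b}" G] by auto
  have pa: "pi a \<in> carrier Q" and pb: "pi b \<in> carrier Q" using pi_closed a b by auto
  obtain a1 a2 a3 where ca: "Hq.coord (pi a) = (a1, a2, a3)" by (cases "Hq.coord (pi a)") auto
  obtain b1 b2 b3 where cb: "Hq.coord (pi b) = (b1, b2, b3)" by (cases "Hq.coord (pi b)") auto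
  have "\<exists>u\<in>carrier Q. \<exists>(ka::nat) (kb::nat). pi a = u [^]\<^bsub>Q\<^esub> ka \<and> pi b = u [^]\<^bsub>Q\<^esub> kb"
  proof (cases "a1 = 0 \<and> a2 = 0")
    case False
    obtain k :: nat where "pi b = pi a [^]\<^bsub>Q\<^esub> k" using Klem[OF a b ab ca False] by blast
    moreover have "pi a = pi a [^]\<^bsub>Q\<^esub> (1::nat)" using Hq.nat_pow_eone[OF pa] by simp
    ultimately show ?thesis using pa by blast
  next
    case Ta: True
    show ?thesis
    proof (cases "b1 = 0 \<and> b2 = 0")
      case False
      obtain k :: nat where "pi a = pi b [^]\<^bsub>Q\<^esub> k" using Klem[OF b a ab[symmetric] cb False] by blast
      moreover have "pi b = pi b [^]\<^bsub>Q\<^esub> (1::nat)" using Hq.nat_pow_eone[OF pb] by simp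
      ultimately show ?thesis using pb by blast
    next
      case True
      have "pi a = z [^]\<^bsub>Q\<^esub> (snd (snd (Hq.coord (pi a))))" using Hq.coord_zero12[OF pa] ca Ta by simp
      moreover have "pi b = z [^]\<^bsub>Q\<^esub> (snd (snd (Hq.coord (pi b))))" using Hq.coord_zero12[OF pb] cb True by simp
      ultimately show ?thesis using xyz by blast
    qed
  qed
  then obtain u ka kb where u: "u \<in> carrier Q" and ia: "pi a = u [^]\<^bsub>Q\<^esub> (ka::nat)"
    and ib: "pi b = u [^]\<^bsub>Q\<^esub> (kb::nat)" by blast
  have img: "\<forall>g\<in>A. \<exists>i::nat. pi g = u [^]\<^bsub>Q\<^esub> i" using cyc_image[OF u a b ia ib] A by simp
  obtain f where f: "\<forall>(i::nat) (j::nat). qz_eq (Hq.beta (u[^]\<^bsub>Q\<^esub>i) (u[^]\<^bsub>Q\<^esub>j))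
      (f (u[^]\<^bsub>Q\<^esub>j) - f (u[^]\<^bsub>Q\<^esub>i \<otimes>\<^bsub>Q\<^esub> u[^]\<^bsub>Q\<^esub>j) + f (u[^]\<^bsub>Q\<^esub>i))"
    using Hq.cyclic_cob[OF finQ u Hq.beta_cocycle] by blast
  have Ac: "A \<subseteq> carrier G" using sg by (rule subgroup.subset)
  show ?thesis
    unfolding coboundary2_def
  proof (rule exI[of _ "\<lambda>g. f (pi g)"], intro ballI)
    fix g h assume g: "g \<in> carrier (G\<lparr>carrier := A\<rparr>)" and h: "h \<in> carrier (G\<lparr>carrier := A\<rparr>)"
    then have gA: "g \<in> A" and hA: "h \<in> A" by auto
    obtain i :: nat where i: "pi g = u [^]\<^bsub>Q\<^esub> i" using img gA by blast
    obtain j :: nat where j: "pi h = u [^]\<^bsub>Q\<^esub> j" using img hA by blast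
    have gc: "g \<in> carrier G" "h \<in> carrier G" using gA hA Ac by auto
    have "pi (g \<otimes> h) = u [^]\<^bsub>Q\<^esub> i \<otimes>\<^bsub>Q\<^esub> u [^]\<^bsub>Q\<^esub> j" unfolding i[symmetric] j[symmetric] by (rule pi_mult[OF gc])
    then show "qz_eq (cG g h) ((\<lambda>g. f (pi g)) h - (\<lambda>g. f (pi g)) (g \<otimes>\<^bsub>G\<lparr>carrier := A\<rparr>\<^esub> h) + (\<lambda>g. f (pi g)) g)"
      unfolding cG_def using f i j by simp
  qed
qed

lemma pi_f5: "pi f5 = \<one>\<^bsub>Q\<^esub>" using pi_N[OF f5N] .
lemma pi_f4: "pi f4 = \<one>\<^bsub>Q\<^esub>" using pi_N[OF f4N] .

lemma noncob: "\<not> coboundary2 G cG"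
proof
  assume "coboundary2 G cG"
  then obtain f where f: "\<forall>g\<in>carrier G. \<forall>h\<in>carrier G. cG g h - (f h - f (g \<otimes> h) + f g) \<in> \<int>"
    unfolding coboundary2_def qz_eq_def by blast
  have E: "cG g h - (f h - f (g \<otimes> h) + f g) \<in> \<int>" if "g \<in> carrier G" "h \<in> carrier G" for g h
    using f that by blast
  have f23: "f2 \<otimes> f3 \<in> carrier G" and f14: "f1 \<otimes> f4 \<in> carrier G" using fin by auto
  have e1: "f2 \<otimes> f3 \<otimes> f5 = f3 \<otimes> f2" using r32 by simp
  have e2: "f1 \<otimes> f4 \<otimes> f5 = f4 \<otimes> f1" using r41 by simp
  have z1: "cG (f2 \<otimes> f3) f5 = 0" "cG (f1 \<otimes> f4) f5 = 0" "cG f1 f4 = 0" "cG f4 f1 = 0"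
    unfolding cG_def using pi_f5 pi_f4 Hq.beta_one_r Hq.beta_one_l by simp_all
  have yz: "cG f2 f3 - cG f3 f2 = - 2 / of_nat p"
    unfolding cG_def using Hq.beta_yz by (simp add: y_def z_def)
  have A: "(cG f2 f3 - (f f3 - f (f2 \<otimes> f3) + f f2)) - (cG f3 f2 - (f f2 - f (f3 \<otimes> f2) + f f3))
     + (cG (f2 \<otimes> f3) f5 - (f f5 - f (f2 \<otimes> f3 \<otimes> f5) + f (f2 \<otimes> f3))) \<in> \<int>"
    by (rule Ints_add[OF Ints_diff[OF E[OF fin(2) fin(3)] E[OF fin(3) fin(2)]] E[OF f23 fin(5)]])
  have B: "(cG f1 f4 - (f f4 - f (f1 \<otimes> f4) + f f1)) - (cG f4 f1 - (f f1 - f (f4 \<otimes> f1) + f f4))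
     + (cG (f1 \<otimes> f4) f5 - (f f5 - f (f1 \<otimes> f4 \<otimes> f5) + f (f1 \<otimes> f4))) \<in> \<int>"
    by (rule Ints_add[OF Ints_diff[OF E[OF fin(1) fin(4)] E[OF fin(4) fin(1)]] E[OF f14 fin(5)]])
  have A': "cG f2 f3 - cG f3 f2 - f f5 \<in> \<int>"
  proof -
    have "(cG f2 f3 - (f f3 - f (f2 \<otimes> f3) + f f2)) - (cG f3 f2 - (f f2 - f (f3 \<otimes> f2) + f f3))
     + (cG (f2 \<otimes> f3) f5 - (f f5 - f (f2 \<otimes> f3 \<otimes> f5) + f (f2 \<otimes> f3))) = cG f2 f3 - cG f3 f2 - f f5"
      unfolding e1 z1 by (simp add: algebra_simps)
    then show ?thesis using A by (simp only:)
  qed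
  have B': "- f f5 \<in> \<int>"
  proof -
    have "(cG f1 f4 - (f f4 - f (f1 \<otimes> f4) + f f1)) - (cG f4 f1 - (f f1 - f (f4 \<otimes> f1) + f f4))
     + (cG (f1 \<otimes> f4) f5 - (f f5 - f (f1 \<otimes> f4 \<otimes> f5) + f (f1 \<otimes> f4))) = - f f5"
      unfolding e2 z1 by (simp add: algebra_simps)
    then show ?thesis using B by (simp only:)
  qed
  have "(cG f2 f3 - cG f3 f2 - f f5) - (- f f5) \<in> \<int>" using A' B' by (rule Ints_diff)
  then have "- 2 / (of_nat p :: rat) \<in> \<int>" using yz by simp
  then have "\<exists>k::int. - 2 / (of_nat p :: rat) = of_int k" by (metis Ints_cases)
  then obtain k :: int where k: "- 2 / (of_nat p :: rat) = of_int k" by (elim exE)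
  then have "(- 2 :: rat) = of_int k * of_nat p" using p_gt1 by (simp add: field_simps)
  then have k2: "- 2 = k * int p" by (metis of_int_eq_iff of_int_mult of_int_of_nat_eq of_int_minus of_int_numeral)
  show False
  proof (cases "k = 0")
    case True then show False using k2 by simp
  next
    case False
    then have k1: "1 \<le> \<bar>k\<bar>" by simp
    have "int p \<le> \<bar>k\<bar> * int p" using mult_right_mono[OF k1, of "int p"] by simp
    then have "\<bar>k * int p\<bar> \<ge> int p" by (simp add: abs_mult)
    then show False using k2 p_ge by simp
  qed
qed

lemma main: "bogomolov_nontrivial G"
  unfolding bogomolov_nontrivial_def using cG_cocycle noncob bicyc by blast

end


theorem lemma2p2:
  fixes G (structure) and p :: nat and f1 f2 f3 f4 f5 :: 'a
  assumes grp: "group G"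
    and p_prime: "Factorial_Ring.prime p" and p_ge: "p \<ge> 3"
    and ordG: "finite (carrier G)" "order G = p ^ 5"
    and fin: "f1 \<in> carrier G" "f2 \<in> carrier G" "f3 \<in> carrier G" "f4 \<in> carrier G" "f5 \<in> carrier G"
    and gen: "generate G {f1, f2, f3, f4, f5} = carrier G"
    and i1: "f4 [^] p = \<one>" "f5 [^] p = \<one>"
    and i2: "\<forall>x\<in>carrier G. x \<otimes> f5 = f5 \<otimes> x"
    and ii: "commutator G f2 f1 = f3" "commutator G f3 f1 = f4"
            "commutator G f4 f1 = f5" "commutator G f3 f2 = f5"
            "commutator G f4 f2 = \<one>" "commutator G f4 f3 = \<one>"
    and iii1: "G\<lparr>carrier := generate G {f4, f5}\<rparr> \<cong> integer_mod_group p \<times>\<times> integer_mod_group p"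
    and iii_normal: "generate G {f4, f5} \<lhd> G"
    and iii2: "order (G Mod generate G {f4, f5}) = p ^ 3"
    and iii3: "\<not> comm_group (G Mod generate G {f4, f5})"
    and iii4: "has_exponent (G Mod generate G {f4, f5}) p"
  shows "bogomolov_nontrivial G"
proof -
  have "L G p f1 f2 f3 f4 f5"
    unfolding L_def L_axioms_def
    using grp p_prime p_ge ordG(1) fin gen i1 i2 ii iii1 iii_normal iii2 iii4 by blast
  then show ?thesis by (rule L.main)
qed

end
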